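(* Let $\Pi$ be a score-at-end WPTS, let $\Phi_{\mathcal B}$ be the predicate $\bigwedge_{x\in V_p}x\in\mathcal B(x)$ for a truncation function $\mathcal B$, and let $\mathcal M:\mathbb{R}^{|V_p|}\to[0,\infty)$ be a bounded function. Let $\Pi_{\mathcal B,\mathcal M}$ be the truncated WPTS. (1) Suppose that for every transition $\langle\ell,\phi,F_1,\dots,F_k\rangle$ of $\Pi$ having a fork whose destination is not $\ell_{\mathrm{out}}$, and every valuation $\mathbf v$ with $(\ell,\mathbf v)$ reachable in $\Pi$, $\mathbf v\models\phi$ and $\mathbf v\not\models\Phi_{\mathcal B}$, we have $\mathrm{ew}_\Pi(\ell,\mathbf v)\le\mathcal M(\mathbf v)$. Then $[\![\Pi]\!]_{\mathbf v_{\mathrm{init}}}(\mathbb{R}^{|V_p|})\le[\![\Pi_{\mathcal B,\mathcal M}]\!]_{\mathbf v_{\mathrm{init}}}(\mathbb{R}^{|V_p|})$ for all $\mathbf v_{\mathrm{init}}\in\operatorname{supp}\mu_{\mathrm{init}}$. (2) If instead $\mathrm{ew}_\Pi(\ell,\mathbf v)\ge\mathcal M(\mathbf v)$ for all such $(\ell,\mathbf v)$, then $[\![\Pi]\!]_{\mathbf v_{\mathrm{init}}}(\mathbb{R}^{|V_p|})\ge[\![\Pi_{\mathcal B,\mathcal M}]\!]_{\mathbf v_{\mathrm{init}}}(\mathbb{R}^{|V_p|})$ for all $\mathbf v_{\mathrm{init}}\in\operatorname{supp}\mu_{\mathrm{init}}$.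
   Context: A WPTS is a tuple $\Pi=(V_p,V_r,L,\ell_{\mathrm{init}},\ell_{\mathrm{out}},\mu_{\mathrm{init}},\mathcal D,\mathfrak T)$: $V_p,V_r$ finite disjoint sets of program and sampling variables; $L$ finite set of locations with $\ell_{\mathrm{init}},\ell_{\mathrm{out}}\in L$; $\mu_{\mathrm{init}}$ a probability distribution on $\mathbb{R}^{|V_p|}$ with bounded support; $\mathcal D$ a product probability distribution on $\mathbb{R}^{|V_r|}$; $\mathfrak T$ a finite set of transitions $\langle\ell,\phi,F_1,\dots,F_k\rangle$ with measurable guard $\phi$ and forks $F_j=\langle\ell'_j,p_j,\mathrm{upd}_j,\mathrm{wt}_j\rangle$ ($p_j\in(0,1]$, $\sum_jp_j=1$, measurable $\mathrm{upd}_j:\mathbb{R}^{|V_p|}\times\mathbb{R}^{|V_r|}\to\mathbb{R}^{|V_p|}$, measurable $\mathrm{wt}_j:\mathbb{R}^{|V_p|}\times\mathbb{R}^{|V_r|}\to[0,\infty)$), such that for each location $\ell$ that is not a termination location and each $\mathbf v$ exactly one transition from $\ell$ has guard satisfied by $\mathbf v$. Runs from a state $(\ell,\mathbf v)$ start with weight $1$; at a termination location the run stays; otherwise the enabled transition is taken, fork $j$ chosen with probability $p_j$, $\mathbf r\sim\mathcal D$ sampled, next weighted state $(\ell'_j,\mathrm{upd}_j(\mathbf v,\mathbf r),w\cdot\mathrm{wt}_j(\mathbf v,\mathbf r))$. $T$ is the first time a termination location is reached, $\hat w_T$ the weight then. $\mathrm{ew}_\Pi(\ell,\mathbf v):=\mathbb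 E_{(\ell,\mathbf v)}[\mathbf 1_{T<\infty}\hat w_T]$ and $[\![\Pi]\!]_{\mathbf v}(\mathbb{R}^{|V_p|}):=\mathrm{ew}_\Pi(\ell_{\mathrm{init}},\mathbf v)$. A state is reachable if it occurs in some run from $(\ell_{\mathrm{init}},\mathbf v_0)$, $\mathbf v_0\in\operatorname{supp}\mu_{\mathrm{init}}$. $\Pi$ is score-at-end if: (i) $\mathbb P_{(\ell_{\mathrm{init}},\mathbf v)}(T<\infty)=1$ for all $\mathbf v\in\operatorname{supp}\mu_{\mathrm{init}}$; (ii) exactly one transition has a fork with destination $\ell_{\mathrm{out}}$, of the form $\langle\ell,\phi,F\rangle$ with single fork $F=\langle\ell_{\mathrm{out}},1,\mathrm{id},\mathrm{wt}\rangle$, $\mathrm{id}(\mathbf v,\mathbf r)=\mathbf v$, $0\le\mathrm{wt}\le M$ for a constant $M>0$; (iii) every other fork has score function constantly $1$. A truncation function $\mathcal B$ maps each $x\in V_p$ to a bounded interval $\mathcal B(x)\subseteq\mathbb{R}$. The truncated WPTS $\Pi_{\mathcal B,\mathcal M}$ has locations $L\cup\{\sharp\}$ with $\sharp$ fresh, both $\ell_{\mathrm{out}}$ and $\sharp$ are termination locations (runs stay there), the same $V_p,V_r,\ell_{\mathrm{init}},\mu_{\mathrm{init}},\mathcal D$, and transitions: for each transition $\langle\ell,\phi,F_1,\dots,F_k\rangle$ of $\Pi$ with $\ell\ne\ell_{\mathrm{out}}$, (a) $\langle\ell,\phi\wedge\Phi_{\mathcal B},F_1,\dots,F_k\rangle$,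 and (b) $\langle\ell,\phi\wedge\neg\Phi_{\mathcal B},F^{\sharp}_1,\dots,F^{\sharp}_k\rangle$ where for $F=\langle\ell',p,\mathrm{upd},\mathrm{wt}\rangle$, $F^\sharp:=F$ if $\ell'=\ell_{\mathrm{out}}$ and otherwise $F^\sharp:=\langle\sharp,p,\mathrm{upd},\mathcal M'\rangle$ with score function $\mathcal M'(\mathbf v,\mathbf r):=\mathcal M(\mathbf v)$. *)

theory Defs
  imports "HOL-Probability.Probability"
begin

text \<open>Valuations of the program variables V_p are vectors in real^'p (the finite
type 'p indexes V_p); samples of the sampling variables V_r are vectors in real^'r.\<close>

type_synonym ('p, 'r) upd_fun = "real^'p \<Rightarrow> real^'r \<Rightarrow> real^'p"
type_synonym ('p, 'r) score_fun = "real^'p \<Rightarrow> real^'r \<Rightarrow> real"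

type_synonym ('l, 'p, 'r) fork = "'l \<times> real \<times> ('p, 'r) upd_fun \<times> ('p, 'r) score_fun"

type_synonym ('l, 'p, 'r) transition = "'l \<times> (real^'p) set \<times> ('l, 'p, 'r) fork list"

definition f_dest :: "('l, 'p::finite, 'r::finite) fork \<Rightarrow> 'l" where
  "f_dest f = fst f"
definition f_prob :: "('l, 'p::finite, 'r::finite) fork \<Rightarrow> real" where
  "f_prob f = fst (snd f)"
definition f_upd :: "('l, 'p::finite, 'r::finite) fork \<Rightarrow> ('p, 'r) upd_fun" where
  "f_upd f = fst (snd (snd f))"
definition f_wt :: "('l, 'p::finite, 'r::finite) fork \<Rightarrow> ('p, 'r) score_fun" where
  "f_wt f = snd (snd (snd f))"

definition t_src :: "('l, 'p::finite, 'r::finite) transition \<Rightarrow> 'l" where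
  "t_src t = fst t"
definition t_guard :: "('l, 'p::finite, 'r::finite) transition \<Rightarrow> (real^'p) set" where
  "t_guard t = fst (snd t)"
definition t_forks :: "('l, 'p::finite, 'r::finite) transition \<Rightarrow> ('l, 'p, 'r) fork list" where
  "t_forks t = snd (snd t)"

record ('l, 'p::finite, 'r::finite) wpts =
  locs :: "'l set"
  l_init :: 'l
  l_out :: 'l
  mu_init :: "(real^'p) measure"
  distD :: "(real^'r) measure"
  trans :: "('l, 'p, 'r) transition list"
  term_locs :: "'l set"

definition msupp :: "('a::metric_space) measure \<Rightarrow> 'a set" where
  "msupp M = {x. \<forall>e>0. emeasure M (ball x e) \<noteq> 0}"

definition product_distribution :: "(real^'r::finite) measure \<Rightarrow> bool" where
  "product_distribution D \<longleftrightarrow>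
     (\<exists>Ds :: 'r \<Rightarrow> real measure.
        (\<forall>i. prob_space (Ds i) \<and> sets (Ds i) = sets borel) \<and>
        D = distr (PiM UNIV Ds) borel (\<lambda>f. \<chi> i. f i))"

definition wpts_wf :: "('l, 'p::finite, 'r::finite, 'x) wpts_scheme \<Rightarrow> bool" where
  "wpts_wf P \<longleftrightarrow>
     finite (locs P) \<and> l_init P \<in> locs P \<and> l_out P \<in> locs P \<and> term_locs P \<subseteq> locs P \<and>
     prob_space (mu_init P) \<and> sets (mu_init P) = sets borel \<and> bounded (msupp (mu_init P)) \<and>
     prob_space (distD P) \<and> sets (distD P) = sets borel \<and> product_distribution (distD P) \<and>
     (\<forall>t \<in> set (trans P).
        t_src t \<in> locs P \<and> t_guard t \<in> sets borel \<and> t_forks t \<noteq> [] \<and>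
        sum_list (map f_prob (t_forks t)) = 1 \<and>
        (\<forall>f \<in> set (t_forks t).
           f_dest f \<in> locs P \<and> 0 < f_prob f \<and> f_prob f \<le> 1 \<and>
           (\<lambda>(v, r). f_upd f v r) \<in> borel_measurable (borel \<Otimes>\<^sub>M borel) \<and>
           (\<lambda>(v, r). f_wt f v r) \<in> borel_measurable (borel \<Otimes>\<^sub>M borel) \<and>
           (\<forall>v r. 0 \<le> f_wt f v r))) \<and>
     (\<forall>l \<in> locs P - term_locs P. \<forall>v.
        \<exists>!t. t \<in> set (trans P) \<and> t_src t = l \<and> v \<in> t_guard t)"

text \<open>The fork of a fork list selected by a uniform sample u in [0,1):
  fork j is chosen iff u lies in [p_0+...+p_{j-1}, p_0+...+p_j), i.e. with probability p_j.\<close>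
definition choose_fork :: "real list \<Rightarrow> real \<Rightarrow> nat" where
  "choose_fork ps u = (LEAST j. u < sum_list (take (Suc j) ps))"

definition enabled_trans ::
  "('l, 'p::finite, 'r::finite, 'x) wpts_scheme \<Rightarrow> 'l \<Rightarrow> real^'p \<Rightarrow> ('l, 'p, 'r) transition" where
  "enabled_trans P l v = (THE t. t \<in> set (trans P) \<and> t_src t = l \<and> v \<in> t_guard t)"

text \<open>Weighted states: (location, valuation, weight).  One step of a run, driven by
  a uniform sample u (fork choice) and a sample r from D.\<close>
definition step ::
  "('l, 'p::finite, 'r::finite, 'x) wpts_scheme \<Rightarrow> 'l \<times> (real^'p) \<times> real \<Rightarrow> real \<times> (real^'r)
     \<Rightarrow> 'l \<times> (real^'p) \<times> real" where
  "step P s ur =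
     (case s of (l, v, w) \<Rightarrow> case ur of (u, r) \<Rightarrow>
        if l \<in> term_locs P then (l, v, w)
        else (let fs = t_forks (enabled_trans P l v);
                  f = fs ! choose_fork (map f_prob fs) u
              in (f_dest f, f_upd f v r, w * f_wt f v r)))"

primrec run ::
  "('l, 'p::finite, 'r::finite, 'x) wpts_scheme \<Rightarrow> 'l \<Rightarrow> real^'p \<Rightarrow> (nat \<Rightarrow> real \<times> (real^'r))
     \<Rightarrow> nat \<Rightarrow> 'l \<times> (real^'p) \<times> real" where
  "run P l v \<omega> 0 = (l, v, 1)"
| "run P l v \<omega> (Suc n) = step P (run P l v \<omega> n) (\<omega> n)"

text \<open>Probability space of the i.i.d. driving sequences: at each step an independent
  uniform sample on [0,1) (fork choice) and an independent sample from D.\<close>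
definition drive_space :: "('l, 'p::finite, 'r::finite, 'x) wpts_scheme \<Rightarrow> (nat \<Rightarrow> real \<times> (real^'r)) measure" where
  "drive_space P = PiM UNIV (\<lambda>_::nat. uniform_measure lborel {0..<1} \<Otimes>\<^sub>M distD P)"

definition terminates :: "('l, 'p::finite, 'r::finite, 'x) wpts_scheme \<Rightarrow> 'l \<Rightarrow> real^'p \<Rightarrow> (nat \<Rightarrow> real \<times> (real^'r)) \<Rightarrow> bool" where
  "terminates P l v \<omega> \<longleftrightarrow> (\<exists>n. fst (run P l v \<omega> n) \<in> term_locs P)"

definition term_time :: "('l, 'p::finite, 'r::finite, 'x) wpts_scheme \<Rightarrow> 'l \<Rightarrow> real^'p \<Rightarrow> (nat \<Rightarrow> real \<times> (real^'r)) \<Rightarrow> nat" where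
  "term_time P l v \<omega> = (LEAST n. fst (run P l v \<omega> n) \<in> term_locs P)"

definition ew :: "('l, 'p::finite, 'r::finite, 'x) wpts_scheme \<Rightarrow> 'l \<Rightarrow> real^'p \<Rightarrow> ennreal" where
  "ew P l v = (\<integral>\<^sup>+ \<omega>. (if terminates P l v \<omega>
        then ennreal (snd (snd (run P l v \<omega> (term_time P l v \<omega>)))) else 0) \<partial>drive_space P)"

text \<open>[[P]]_v(R^|V_p|) = ew(l_init, v).\<close>
definition total_mass :: "('l, 'p::finite, 'r::finite, 'x) wpts_scheme \<Rightarrow> real^'p \<Rightarrow> ennreal" where
  "total_mass P v = ew P (l_init P) v"

inductive reachable :: "('l, 'p::finite, 'r::finite, 'x) wpts_scheme \<Rightarrow> 'l \<Rightarrow> real^'p \<Rightarrow> bool"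
  for P where
  init: "v0 \<in> msupp (mu_init P) \<Longrightarrow> reachable P (l_init P) v0"
| step: "reachable P l v \<Longrightarrow> l \<notin> term_locs P \<Longrightarrow> t = enabled_trans P l v \<Longrightarrow>
         f \<in> set (t_forks t) \<Longrightarrow> reachable P (f_dest f) (f_upd f v r)"

definition score_at_end :: "('l, 'p::finite, 'r::finite, 'x) wpts_scheme \<Rightarrow> bool" where
  "score_at_end P \<longleftrightarrow>
     (\<forall>v \<in> msupp (mu_init P).
        emeasure (drive_space P) {\<omega> \<in> space (drive_space P). terminates P (l_init P) v \<omega>} = 1) \<and>
     (\<exists>!t. t \<in> set (trans P) \<and> (\<exists>f \<in> set (t_forks t). f_dest f = l_out P)) \<and>
     (\<forall>t \<in> set (trans P). (\<exists>f \<in> set (t_forks t). f_dest f = l_out P) \<longrightarrow>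
        (\<exists>wt Mc. t_forks t = [(l_out P, 1, \<lambda>v r. v, wt)] \<and> 0 < Mc \<and>
                 (\<forall>v r. 0 \<le> wt v r \<and> wt v r \<le> Mc))) \<and>
     (\<forall>t \<in> set (trans P). \<forall>f \<in> set (t_forks t). f_dest f \<noteq> l_out P \<longrightarrow>
        f_wt f = (\<lambda>v r. 1))"

definition truncation_fun :: "('p::finite \<Rightarrow> real set) \<Rightarrow> bool" where
  "truncation_fun B \<longleftrightarrow> (\<forall>x. is_interval (B x) \<and> bounded (B x))"

definition PhiB :: "('p::finite \<Rightarrow> real set) \<Rightarrow> real^'p \<Rightarrow> bool" where
  "PhiB B v \<longleftrightarrow> (\<forall>x. v $ x \<in> B x)"

definition lift_fork :: "('l, 'p::finite, 'r::finite) fork \<Rightarrow> ('l option, 'p, 'r) fork" where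
  "lift_fork f = (Some (f_dest f), f_prob f, f_upd f, f_wt f)"

definition sharp_fork ::
  "'l \<Rightarrow> (real^'p \<Rightarrow> real) \<Rightarrow> ('l, 'p::finite, 'r::finite) fork \<Rightarrow> ('l option, 'p, 'r) fork" where
  "sharp_fork lo M f =
     (if f_dest f = lo then lift_fork f else (None, f_prob f, f_upd f, \<lambda>v r. M v))"

text \<open>The truncated WPTS; the fresh location is None, old locations l become Some l.\<close>
definition truncate ::
  "('l, 'p::finite, 'r::finite) wpts \<Rightarrow> ('p \<Rightarrow> real set) \<Rightarrow> (real^'p \<Rightarrow> real) \<Rightarrow> ('l option, 'p, 'r) wpts" where
  "truncate P B M =
     \<lparr> locs = Some ` locs P \<union> {None},
       l_init = Some (l_init P),
       l_out = Some (l_out P),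
       mu_init = mu_init P,
       distD = distD P,
       trans = concat (map (\<lambda>t.
                 [(Some (t_src t), t_guard t \<inter> {v. PhiB B v}, map lift_fork (t_forks t)),
                  (Some (t_src t), t_guard t \<inter> {v. \<not> PhiB B v}, map (sharp_fork (l_out P) M) (t_forks t))])
               (filter (\<lambda>t. t_src t \<noteq> l_out P) (trans P))),
       term_locs = {Some (l_out P), None} \<rparr>"

end

theory Submission
  imports Defs
begin


definition cl :: "real \<times> 'b \<Rightarrow> real \<times> 'b" where
  "cl x = (if fst x \<in> {0..<1} then fst x else 0, snd x)"

primrec runs ::
  "('l, 'p::finite, 'r::finite, 'x) wpts_scheme \<Rightarrow> 'l \<times> (real^'p) \<times> real \<Rightarrow> (nat \<Rightarrow> real \<times> (real^'r))
     \<Rightarrow> nat \<Rightarrow> 'l \<times> (real^'p) \<times> real" where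
  "runs Q s \<omega> 0 = s"
| "runs Q s \<omega> (Suc n) = step Q (runs Q s \<omega> n) (\<omega> n)"

lemma run_runs: "run Q l v \<omega> n = runs Q (l, v, 1) \<omega> n"
  by (induction n) auto

lemma runs_Suc': "runs Q s \<omega> (Suc n) = runs Q (step Q s (\<omega> 0)) (\<lambda>k. \<omega> (Suc k)) n"
  by (induction n arbitrary: s) auto

lemma step_term: "fst s \<in> term_locs Q \<Longrightarrow> step Q s x = s"
  by (cases s; cases x) (auto simp: step_def)

lemma runs_term: "fst (runs Q s \<omega> n) \<in> term_locs Q \<Longrightarrow> runs Q s \<omega> (n + k) = runs Q s \<omega> n"
  by (induction k) (auto simp: step_term)

lemma runs_term0: "fst s \<in> term_locs Q \<Longrightarrow> runs Q s \<omega> n = s"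
  using runs_term[of Q s \<omega> 0 n] by simp

definition Fv :: "('l, 'p::finite, 'r::finite, 'x) wpts_scheme \<Rightarrow> 'l \<times> (real^'p) \<times> real \<Rightarrow> ennreal" where
  "Fv Q s = (if fst s \<in> term_locs Q then ennreal (snd (snd s)) else 0)"

lemma Fv_runs_mono: "m \<le> n \<Longrightarrow> Fv Q (runs Q s \<omega> m) \<le> Fv Q (runs Q s \<omega> n)"
proof -
  assume "m \<le> n"
  then obtain k where n: "n = m + k" using le_Suc_ex by blast
  show ?thesis
  proof (cases "fst (runs Q s \<omega> m) \<in> term_locs Q")
    case True thus ?thesis using runs_term[OF True, of k] n by simp
  next
    case False thus ?thesis by (simp add: Fv_def)
  qed
qed

lemma incseq_Fv: "incseq (\<lambda>n. Fv Q (runs Q s \<omega> n))"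
  by (simp add: incseq_def Fv_runs_mono)

lemma SUP_Fv_run:
  "(SUP n. Fv Q (runs Q (l, v, 1) \<omega> n)) =
   (if terminates Q l v \<omega> then ennreal (snd (snd (run Q l v \<omega> (term_time Q l v \<omega>)))) else 0)"
proof (cases "terminates Q l v \<omega>")
  case True
  let ?T = "term_time Q l v \<omega>"
  have T: "fst (runs Q (l,v,1) \<omega> ?T) \<in> term_locs Q"
    using True unfolding terminates_def term_time_def run_runs by (metis LeastI)
  have lt: "n < ?T \<Longrightarrow> fst (runs Q (l,v,1) \<omega> n) \<notin> term_locs Q" for n
    unfolding term_time_def run_runs using not_less_Least by blast
  have "(SUP n. Fv Q (runs Q (l, v, 1) \<omega> n)) = Fv Q (runs Q (l, v, 1) \<omega> ?T)"
  proof (rule antisym)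
    show "(SUP n. Fv Q (runs Q (l, v, 1) \<omega> n)) \<le> Fv Q (runs Q (l, v, 1) \<omega> ?T)"
    proof (rule SUP_least)
      fix n show "Fv Q (runs Q (l, v, 1) \<omega> n) \<le> Fv Q (runs Q (l, v, 1) \<omega> ?T)"
      proof (cases "n < ?T")
        case True thus ?thesis using lt[OF True] by (simp add: Fv_def)
      next
        case False
        then obtain k where "n = ?T + k" using le_Suc_ex not_less by blast
        thus ?thesis using runs_term[OF T, of k] by simp
      qed
    qed
  qed (rule SUP_upper, simp)
  thus ?thesis using True T by (simp add: Fv_def run_runs)
next
  case False
  hence "fst (runs Q (l,v,1) \<omega> n) \<notin> term_locs Q" for n
    unfolding terminates_def run_runs by blast
  thus ?thesis using False by (simp add: Fv_def)
qed



definition good :: "('l, 'p::finite, 'r::finite, 'x) wpts_scheme \<Rightarrow> bool" where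
 "good Q \<longleftrightarrow> prob_space (distD Q) \<and> sets (distD Q) = sets borel \<and>
   (\<forall>t\<in>set (trans Q). t_guard t \<in> sets borel \<and> sum_list (map f_prob (t_forks t)) = 1 \<and>
     (\<forall>f\<in>set (t_forks t). f_dest f \<in> locs Q \<and>
       (\<lambda>(v, r). f_upd f v r) \<in> borel_measurable (borel \<Otimes>\<^sub>M borel) \<and>
       (\<lambda>(v, r). f_wt f v r) \<in> borel_measurable (borel \<Otimes>\<^sub>M borel))) \<and>
   (\<forall>l\<in>locs Q - term_locs Q. \<forall>v. \<exists>!t. t \<in> set (trans Q) \<and> t_src t = l \<and> v \<in> t_guard t)"

lemma choose_lt: assumes "sum_list ps = 1" "u < 1" shows "choose_fork ps u < length ps"
proof -
  have ne: "ps \<noteq> []" using assms(1) by auto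
  have "u < sum_list (take (Suc (length ps - 1)) ps)" using assms ne by simp
  hence "choose_fork ps u \<le> length ps - 1" unfolding choose_fork_def by (rule Least_le)
  thus ?thesis using ne by (cases ps) auto
qed

lemma choose_meas: "(\<lambda>u. choose_fork ps u) \<in> measurable borel (count_space UNIV)"
  unfolding choose_fork_def by measurable

lemma cl_fst: "fst (cl x) \<in> {0..<1}" by (simp add: cl_def)

lemma cl_meas[measurable]: "cl \<in> measurable (borel \<Otimes>\<^sub>M M) (borel \<Otimes>\<^sub>M M)"
  unfolding cl_def by measurable

lemma enabled_eq:
  assumes "good Q" "l \<in> locs Q - term_locs Q" "t \<in> set (trans Q)" "t_src t = l" "v \<in> t_guard t"
  shows "enabled_trans Q l v = t"
proof -
  have "\<exists>!t. t \<in> set (trans Q) \<and> t_src t = l \<and> v \<in> t_guard t"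
    using assms(1,2) unfolding good_def by blast
  thus ?thesis unfolding enabled_trans_def by (rule the1_equality) (use assms in auto)
qed

lemma enabled_ex:
  assumes "good Q" "l \<in> locs Q - term_locs Q"
  shows "enabled_trans Q l v \<in> set (trans Q) \<and> t_src (enabled_trans Q l v) = l \<and> v \<in> t_guard (enabled_trans Q l v)"
proof -
  obtain t where "t \<in> set (trans Q)" "t_src t = l" "v \<in> t_guard t"
    using assms unfolding good_def by blast
  thus ?thesis using enabled_eq[OF assms] by auto
qed

lemma sum_single: "finite A \<Longrightarrow> a \<in> A \<Longrightarrow> (\<And>b. b \<in> A \<Longrightarrow> b \<noteq> a \<Longrightarrow> f b = 0) \<Longrightarrow> sum f A = f a"
  by (simp add: sum.remove sum.neutral)

lemma meas_comp2:
  assumes "(\<lambda>(v, r). g v r) \<in> borel_measurable (borel \<Otimes>\<^sub>M borel)"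
    and "a \<in> borel_measurable M" "b \<in> borel_measurable M"
  shows "(\<lambda>x. g (a x) (b x)) \<in> borel_measurable M"
  using measurable_compose[OF measurable_Pair[OF assms(2,3)] assms(1)] by simp

abbreviation Omb :: "(nat \<Rightarrow> real \<times> (real^'r::finite)) measure" where
  "Omb \<equiv> PiM UNIV (\<lambda>_. borel \<Otimes>\<^sub>M borel)"

lemma step_nonterm:
  assumes "good Q" "l \<in> locs Q - term_locs Q"
  shows "step Q (l, v, w) (cl x) =
    (let t = enabled_trans Q l v; j = choose_fork (map f_prob (t_forks t)) (fst (cl x)); f = t_forks t ! j
     in (f_dest f, f_upd f v (snd x), w * f_wt f v (snd x)))"
proof -
  obtain u r where x: "x = (u, r)" by (cases x)
  have "l \<notin> term_locs Q" using assms(2) by simp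
  thus ?thesis unfolding step_def x cl_def Let_def by simp
qed


lemma meas_runs:
  fixes Q :: "('l, 'p::finite, 'r::finite, 'x) wpts_scheme"
  assumes g: "good Q"
  shows "l \<in> locs Q \<Longrightarrow> (\<lambda>x. Fv Q (runs Q (l, fst x, fst (snd x)) (cl \<circ> snd (snd x)) n))
           \<in> borel_measurable (borel \<Otimes>\<^sub>M borel \<Otimes>\<^sub>M (Omb::(nat \<Rightarrow> real \<times> (real^'r::finite)) measure))"
proof (induction n arbitrary: l)
  case 0
  show ?case by (cases "l \<in> term_locs Q"; simp add: Fv_def; measurable)
next
  case (Suc n l)
  show ?case
  proof (cases "l \<in> term_locs Q")
    case True
    thus ?thesis by (simp add: runs_term0 Fv_def del: runs.simps; measurable)
  next
    case False
    hence lnt: "l \<in> locs Q - term_locs Q" using Suc.prems by auto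
    define G where "G l' x = Fv Q (runs Q (l', fst x, fst (snd x)) (cl \<circ> snd (snd x)) n)" for l' x
    define TS where "TS = {t \<in> set (trans Q). t_src t = l}"
    define H where "H x = (\<Sum>t\<in>TS. \<Sum>j<length (t_forks t).
        indicator (t_guard t) (fst x) *
        indicator {y. choose_fork (map f_prob (t_forks t)) (fst (cl y)) = j} (snd (snd x) 0) *
        G (f_dest (t_forks t ! j)) (f_upd (t_forks t ! j) (fst x) (snd (snd (snd x) 0)),
            fst (snd x) * f_wt (t_forks t ! j) (fst x) (snd (snd (snd x) 0)), \<lambda>k. snd (snd x) (Suc k)))"
      for x :: "(real^'p) \<times> real \<times> (nat \<Rightarrow> real \<times> (real^'r))"
    have eq: "Fv Q (runs Q (l, fst x, fst (snd x)) (cl \<circ> snd (snd x)) (Suc n)) = H x" for x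
    proof -
      obtain v w \<omega> where x: "x = (v, w, \<omega>)" by (cases x) auto
      define t0 where "t0 = enabled_trans Q l v"
      define j0 where "j0 = choose_fork (map f_prob (t_forks t0)) (fst (cl (\<omega> 0)))"
      have t0: "t0 \<in> TS" "v \<in> t_guard t0" using enabled_ex[OF g lnt, of v] by (auto simp: TS_def t0_def)
      have s1: "sum_list (map f_prob (t_forks t0)) = 1" using t0 g by (auto simp: good_def TS_def)
      have j0: "j0 < length (t_forks t0)" unfolding j0_def
        using choose_lt[OF s1, of "fst (cl (\<omega> 0))"] cl_fst[of "\<omega> 0"] by simp
      have "H x = (\<Sum>j<length (t_forks t0).
        indicator (t_guard t0) v *
        indicator {y. choose_fork (map f_prob (t_forks t0)) (fst (cl y)) = j} (\<omega> 0) *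
        G (f_dest (t_forks t0 ! j)) (f_upd (t_forks t0 ! j) v (snd (\<omega> 0)),
            w * f_wt (t_forks t0 ! j) v (snd (\<omega> 0)), \<lambda>k. \<omega> (Suc k)))"
        unfolding H_def x fst_conv snd_conv
      proof (rule sum_single)
        show "finite TS" by (simp add: TS_def)
        show "t0 \<in> TS" by fact
        fix t assume "t \<in> TS" "t \<noteq> t0"
        hence "v \<notin> t_guard t" using enabled_eq[OF g lnt, of t v] by (auto simp: TS_def t0_def)
        thus "(\<Sum>j<length (t_forks t). indicator (t_guard t) v *
          indicator {y. choose_fork (map f_prob (t_forks t)) (fst (cl y)) = j} (\<omega> 0) *
          G (f_dest (t_forks t ! j)) (f_upd (t_forks t ! j) v (snd (\<omega> 0)),
            w * f_wt (t_forks t ! j) v (snd (\<omega> 0)), \<lambda>k. \<omega> (Suc k))) = 0" by simp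
      qed
      also have "\<dots> = G (f_dest (t_forks t0 ! j0)) (f_upd (t_forks t0 ! j0) v (snd (\<omega> 0)),
            w * f_wt (t_forks t0 ! j0) v (snd (\<omega> 0)), \<lambda>k. \<omega> (Suc k))"
        by (subst sum_single[where a=j0]) (use j0 t0 in \<open>auto simp: j0_def\<close>)
      also have "\<dots> = Fv Q (runs Q (l, fst x, fst (snd x)) (cl \<circ> snd (snd x)) (Suc n))"
        unfolding x G_def runs_Suc' fst_conv snd_conv
        using step_nonterm[OF g lnt, of v w "\<omega> 0"]
        by (simp add: Let_def t0_def j0_def comp_def cl_def)
      finally show ?thesis by simp
    qed
    have eqf: "(\<lambda>x. Fv Q (runs Q (l, fst x, fst (snd x)) (cl \<circ> snd (snd x)) (Suc n))) = H"
      by (rule ext, rule eq)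
    have hm: "H \<in> borel_measurable (borel \<Otimes>\<^sub>M borel \<Otimes>\<^sub>M Omb)"
      unfolding H_def
    proof (intro borel_measurable_sum borel_measurable_times_ennreal)
      fix t j assume t: "t \<in> TS" and j: "j \<in> {..<length (t_forks t)}"
      have gd: "t_guard t \<in> sets borel" using t g by (auto simp: good_def TS_def)
      show "(\<lambda>x::(real^'p) \<times> real \<times> (nat \<Rightarrow> real \<times> (real^'r)). indicator (t_guard t) (fst x) :: ennreal)
             \<in> borel_measurable (borel \<Otimes>\<^sub>M borel \<Otimes>\<^sub>M Omb)"
        using gd by measurable
      have cm: "(\<lambda>y::real \<times> (real^'r). choose_fork (map f_prob (t_forks t)) (fst (cl y))) \<in> measurable (borel \<Otimes>\<^sub>M borel) (count_space UNIV)"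
        by (rule measurable_compose[OF _ choose_meas]) measurable
      have "{y \<in> space (borel \<Otimes>\<^sub>M borel). choose_fork (map f_prob (t_forks t)) (fst (cl y)) = j} \<in> sets (borel \<Otimes>\<^sub>M (borel :: (real^'r) measure))"
        using cm by measurable
      hence "{y::real \<times> (real^'r). choose_fork (map f_prob (t_forks t)) (fst (cl y)) = j} \<in> sets (borel \<Otimes>\<^sub>M borel)"
        by (simp add: space_pair_measure)
      thus "(\<lambda>x::(real^'p) \<times> real \<times> (nat \<Rightarrow> real \<times> (real^'r)). indicator {y. choose_fork (map f_prob (t_forks t)) (fst (cl y)) = j} (snd (snd x) 0) :: ennreal)
             \<in> borel_measurable (borel \<Otimes>\<^sub>M borel \<Otimes>\<^sub>M Omb)"
        by measurable
      define f where "f = t_forks t ! j"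
      have f: "f \<in> set (t_forks t)" using j by (simp add: f_def)
      have fd: "f_dest f \<in> locs Q" and fu: "(\<lambda>(v, r). f_upd f v r) \<in> borel_measurable (borel \<Otimes>\<^sub>M borel)"
        and fw: "(\<lambda>(v, r). f_wt f v r) \<in> borel_measurable (borel \<Otimes>\<^sub>M borel)"
        using f t g by (auto simp: good_def TS_def)
      have IH: "G (f_dest f) \<in> borel_measurable (borel \<Otimes>\<^sub>M borel \<Otimes>\<^sub>M Omb)"
        unfolding G_def[abs_def] by (rule Suc.IH[OF fd])
      have m1: "(\<lambda>x::(real^'p) \<times> real \<times> (nat \<Rightarrow> real \<times> (real^'r)). f_upd f (fst x) (snd (snd (snd x) 0))) \<in> borel_measurable (borel \<Otimes>\<^sub>M borel \<Otimes>\<^sub>M Omb)"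
        by (rule meas_comp2[OF fu]) measurable
      have m2: "(\<lambda>x::(real^'p) \<times> real \<times> (nat \<Rightarrow> real \<times> (real^'r)). f_wt f (fst x) (snd (snd (snd x) 0))) \<in> borel_measurable (borel \<Otimes>\<^sub>M borel \<Otimes>\<^sub>M Omb)"
        by (rule meas_comp2[OF fw]) measurable
      have m3: "(\<lambda>x::(real^'p) \<times> real \<times> (nat \<Rightarrow> real \<times> (real^'r)). \<lambda>k. snd (snd x) (Suc k)) \<in> measurable (borel \<Otimes>\<^sub>M borel \<Otimes>\<^sub>M Omb) Omb"
        by (rule measurable_PiM_single') (measurable, auto simp: space_pair_measure space_PiM)
      show "(\<lambda>x::(real^'p) \<times> real \<times> (nat \<Rightarrow> real \<times> (real^'r)). G (f_dest (t_forks t ! j)) (f_upd (t_forks t ! j) (fst x) (snd (snd (snd x) 0)),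
            fst (snd x) * f_wt (t_forks t ! j) (fst x) (snd (snd (snd x) 0)), \<lambda>k. snd (snd x) (Suc k)))
          \<in> borel_measurable (borel \<Otimes>\<^sub>M borel \<Otimes>\<^sub>M Omb)"
        unfolding f_def[symmetric]
        by (rule measurable_compose[OF _ IH]) (intro measurable_Pair m1 m3 borel_measurable_times m2; measurable)
    qed
    show ?thesis unfolding eqf by (rule hm)
  qed
qed



definition Xm :: "('l, 'p::finite, 'r::finite, 'x) wpts_scheme \<Rightarrow> (real \<times> (real^'r)) measure" where
  "Xm Q = uniform_measure lborel {0..<1} \<Otimes>\<^sub>M distD Q"

definition En :: "('l, 'p::finite, 'r::finite, 'x) wpts_scheme \<Rightarrow> nat \<Rightarrow> 'l \<times> (real^'p) \<times> real \<Rightarrow> ennreal" where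
  "En Q n s = (\<integral>\<^sup>+\<omega>. Fv Q (runs Q s (cl \<circ> \<omega>) n) \<partial>drive_space Q)"

definition Ei :: "('l, 'p::finite, 'r::finite, 'x) wpts_scheme \<Rightarrow> 'l \<times> (real^'p) \<times> real \<Rightarrow> ennreal" where
  "Ei Q s = (SUP n. En Q n s)"

lemma drive_Xm: "drive_space Q = PiM UNIV (\<lambda>_. Xm Q)"
  by (simp add: drive_space_def Xm_def)

lemma sets_Xm: "good Q \<Longrightarrow> sets (Xm Q) = sets (borel \<Otimes>\<^sub>M borel)"
  unfolding Xm_def good_def by (intro sets_pair_measure_cong) auto

lemma sets_drive: "good Q \<Longrightarrow> sets (drive_space Q) = sets Omb"
  unfolding drive_Xm by (intro sets_PiM_cong) (auto simp: sets_Xm)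

lemma prob_Xm: "good Q \<Longrightarrow> prob_space (Xm Q)"
  unfolding Xm_def good_def
  by (intro prob_space_pair prob_space_uniform_measure) auto

lemma seq_space: "good Q \<Longrightarrow> sequence_space (Xm Q)"
  unfolding sequence_space_def product_prob_space_def product_prob_space_axioms_def product_sigma_finite_def
  using prob_Xm by (auto intro: prob_space_imp_sigma_finite)

lemma prob_drive: "good Q \<Longrightarrow> prob_space (drive_space Q)"
proof -
  assume g: "good Q"
  interpret sequence_space "Xm Q" using seq_space[OF g] .
  show ?thesis unfolding drive_Xm by (rule prob_space_PiM) (rule M.prob_space_axioms)
qed

lemma meas_fix:
  fixes Q :: "('l, 'p::finite, 'r::finite, 'x) wpts_scheme"
  assumes g: "good Q" and l: "l \<in> locs Q"
  shows "(\<lambda>\<omega>. Fv Q (runs Q (l, v, w) (cl \<circ> \<omega>) n)) \<in> borel_measurable (drive_space Q)"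
proof -
  have "(\<lambda>\<omega>. Fv Q (runs Q (l, v, w) (cl \<circ> \<omega>) n)) \<in> borel_measurable (Omb :: (nat \<Rightarrow> real \<times> (real^'r)) measure)"
    using measurable_compose[OF _ meas_runs[OF g l, of n], of "\<lambda>\<omega>. (v, w, \<omega>)"] by simp
  thus ?thesis using measurable_cong_sets[OF sets_drive[OF g, symmetric] refl] by blast
qed



lemma bellman_n:
  fixes Q :: "('l, 'p::finite, 'r::finite, 'x) wpts_scheme"
  assumes g: "good Q" and l: "l \<in> locs Q"
  shows "En Q (Suc n) (l, v, w) = (\<integral>\<^sup>+x. En Q n (step Q (l, v, w) (cl x)) \<partial>Xm Q)"
    and "(\<lambda>x. En Q n (step Q (l, v, w) (cl x))) \<in> borel_measurable (Xm Q)"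
proof -
  interpret sequence_space "Xm Q" using seq_space[OF g] .
  define f where "f \<omega> = Fv Q (runs Q (l, v, w) (cl \<circ> \<omega>) (Suc n))" for \<omega>
  have fm: "f \<in> borel_measurable S" using meas_fix[OF g l, of v w "Suc n"] unfolding f_def drive_Xm by (simp del: runs.simps)
  have gm: "(\<lambda>(x, \<omega>). case_nat x \<omega>) \<in> measurable (Xm Q \<Otimes>\<^sub>M S) S" by measurable
  have fgm: "(\<lambda>z. f (case_prod case_nat z)) \<in> borel_measurable (Xm Q \<Otimes>\<^sub>M S)"
    using measurable_compose[OF gm fm] by (simp add: split_beta')
  have key: "f (case_nat x \<omega>') = Fv Q (runs Q (step Q (l, v, w) (cl x)) (cl \<circ> \<omega>') n)" for x \<omega>'
    unfolding f_def runs_Suc' by (simp add: comp_def)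
  have inner: "(\<integral>\<^sup>+\<omega>'. f (case_prod case_nat (x, \<omega>')) \<partial>S) = En Q n (step Q (l, v, w) (cl x))" for x
    unfolding En_def drive_Xm using key by simp
  have "En Q (Suc n) (l, v, w) = integral\<^sup>N S f" unfolding En_def f_def drive_Xm ..
  also have "\<dots> = integral\<^sup>N (distr (Xm Q \<Otimes>\<^sub>M S) S (\<lambda>(x, \<omega>). case_nat x \<omega>)) f"
    using PiM_iter by simp
  also have "\<dots> = (\<integral>\<^sup>+z. f (case_prod case_nat z) \<partial>(Xm Q \<Otimes>\<^sub>M S))"
    by (rule nn_integral_distr[OF gm]) (use fm PiM_iter in simp)
  also have "\<dots> = (\<integral>\<^sup>+x. \<integral>\<^sup>+\<omega>'. f (case_prod case_nat (x, \<omega>')) \<partial>S \<partial>Xm Q)"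
    by (rule P.nn_integral_fst[OF fgm, symmetric])
  finally show "En Q (Suc n) (l, v, w) = (\<integral>\<^sup>+x. En Q n (step Q (l, v, w) (cl x)) \<partial>Xm Q)"
    using inner by simp
  show "(\<lambda>x. En Q n (step Q (l, v, w) (cl x))) \<in> borel_measurable (Xm Q)"
    using P.borel_measurable_nn_integral_fst[OF fgm] inner by simp
qed



lemma step_fork:
  assumes g: "good Q" and l: "l \<in> locs Q - term_locs Q"
  shows "\<exists>f \<in> set (t_forks (enabled_trans Q l v)).
           step Q (l, v, w) (cl x) = (f_dest f, f_upd f v (snd x), w * f_wt f v (snd x))"
proof -
  let ?t = "enabled_trans Q l v"
  have t: "?t \<in> set (trans Q)" using enabled_ex[OF g l] by blast
  have s1: "sum_list (map f_prob (t_forks ?t)) = 1" using t g by (auto simp: good_def)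
  have j: "choose_fork (map f_prob (t_forks ?t)) (fst (cl x)) < length (t_forks ?t)"
    using choose_lt[OF s1, of "fst (cl x)"] cl_fst[of x] by simp
  show ?thesis using step_nonterm[OF g l, of v w x] j by (auto simp: Let_def)
qed

lemma step_locs:
  assumes g: "good Q" and l: "l \<in> locs Q"
  shows "fst (step Q (l, v, w) (cl x)) \<in> locs Q"
proof (cases "l \<in> term_locs Q")
  case True thus ?thesis using l by (simp add: step_term)
next
  case False
  then obtain f where f: "f \<in> set (t_forks (enabled_trans Q l v))"
    and e: "step Q (l, v, w) (cl x) = (f_dest f, f_upd f v (snd x), w * f_wt f v (snd x))"
    using step_fork[OF g, of l v w x] l by blast
  have "enabled_trans Q l v \<in> set (trans Q)" using enabled_ex[OF g] l False by blast
  thus ?thesis using f e g by (auto simp: good_def)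
qed

lemma En_mono: "En Q n s \<le> En Q (Suc n) s"
  unfolding En_def by (intro nn_integral_mono) (rule Fv_runs_mono, simp)

lemma En_incseq: "incseq (\<lambda>n. En Q n s)"
  by (rule incseq_SucI) (rule En_mono)

lemma En_term:
  assumes g: "good Q" and t: "fst s \<in> term_locs Q"
  shows "En Q n s = Fv Q s"
proof -
  interpret prob_space "drive_space Q" using prob_drive[OF g] .
  show ?thesis unfolding En_def runs_term0[OF t] by (simp add: emeasure_space_1)
qed

lemma Ei_term: "good Q \<Longrightarrow> fst s \<in> term_locs Q \<Longrightarrow> Ei Q s = Fv Q s"
  by (simp add: Ei_def En_term)

lemma SUP_Suc_incseq: "incseq (f :: nat \<Rightarrow> ennreal) \<Longrightarrow> (SUP n. f (Suc n)) = (SUP n. f n)"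
  by (intro antisym SUP_mono) (auto dest: incseq_SucD)

lemma bellman_inf:
  fixes Q :: "('l, 'p::finite, 'r::finite, 'x) wpts_scheme"
  assumes g: "good Q" and l: "l \<in> locs Q"
  shows "Ei Q (l, v, w) = (\<integral>\<^sup>+x. Ei Q (step Q (l, v, w) (cl x)) \<partial>Xm Q)"
proof -
  have "Ei Q (l, v, w) = (SUP n. En Q (Suc n) (l, v, w))"
    unfolding Ei_def by (simp add: SUP_Suc_incseq[OF En_incseq])
  also have "\<dots> = (SUP n. \<integral>\<^sup>+x. En Q n (step Q (l, v, w) (cl x)) \<partial>Xm Q)"
    using bellman_n(1)[OF g l] by simp
  also have "\<dots> = (\<integral>\<^sup>+x. (SUP n. En Q n (step Q (l, v, w) (cl x))) \<partial>Xm Q)"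
    by (rule nn_integral_monotone_convergence_SUP[symmetric])
       (auto simp: incseq_def le_fun_def intro: incseq_SucI[THEN incseqD] En_mono bellman_n(2)[OF g l])
  finally show ?thesis by (simp add: Ei_def)
qed



lemma AE_cl:
  assumes g: "good Q"
  shows "AE \<omega> in drive_space Q. cl \<circ> \<omega> = \<omega>"
proof -
  interpret sequence_space "Xm Q" using seq_space[OF g] .
  have pd: "prob_space (distD Q)" "sets (distD Q) = sets borel" using g by (auto simp: good_def)
  interpret U: prob_space "uniform_measure lborel {0..<1::real}"
    by (rule prob_space_uniform_measure) auto
  interpret D: prob_space "distD Q" by (rule pd(1))
  interpret UD: pair_sigma_finite "uniform_measure lborel {0..<1::real}" "distD Q" ..
  have "AE x in Xm Q. fst x \<in> {0..<1}"
    unfolding Xm_def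
  proof (rule UD.AE_pair_measure)
    show "{x \<in> space (uniform_measure lborel {0..<1} \<Otimes>\<^sub>M distD Q). fst x \<in> {0..<1::real}}
          \<in> sets (uniform_measure lborel {0..<1} \<Otimes>\<^sub>M distD Q)"
      by measurable
    show "AE x in uniform_measure lborel {0..<1}. AE y in distD Q. fst (x, y) \<in> {0..<1::real}"
      by (rule AE_uniform_measureI) auto
  qed
  hence "AE \<omega> in S. fst (\<omega> n) \<in> {0..<1}" for n
    using AE_component[of n "\<lambda>x. fst x \<in> {0..<1}"] by simp
  hence "AE \<omega> in S. \<forall>n. fst (\<omega> n) \<in> {0..<1}" by (simp add: AE_all_countable)
  thus ?thesis unfolding drive_Xm
    by eventually_elim (auto simp: cl_def fun_eq_iff)
qed

lemma ew_Ei: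
  assumes g: "good Q" and l: "l \<in> locs Q"
  shows "ew Q l v = Ei Q (l, v, 1)"
proof -
  have "ew Q l v = (\<integral>\<^sup>+\<omega>. (SUP n. Fv Q (runs Q (l, v, 1) \<omega> n)) \<partial>drive_space Q)"
    unfolding ew_def SUP_Fv_run ..
  also have "\<dots> = (\<integral>\<^sup>+\<omega>. (SUP n. Fv Q (runs Q (l, v, 1) (cl \<circ> \<omega>) n)) \<partial>drive_space Q)"
    by (rule nn_integral_cong_AE) (use AE_cl[OF g] in \<open>eventually_elim, simp\<close>)
  also have "\<dots> = (SUP n. En Q n (l, v, 1))"
    unfolding En_def
    by (rule nn_integral_monotone_convergence_SUP)
       (auto simp: incseq_def le_fun_def Fv_runs_mono intro: meas_fix[OF g l])
  finally show ?thesis by (simp add: Ei_def)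
qed



lemma good_P: "wpts_wf P \<Longrightarrow> good P"
  unfolding wpts_wf_def good_def by auto

lemma lift_fork_simps[simp]:
  "f_dest (lift_fork f) = Some (f_dest f)" "f_prob (lift_fork f) = f_prob f"
  "f_upd (lift_fork f) = f_upd f" "f_wt (lift_fork f) = f_wt f"
  by (simp_all add: lift_fork_def f_dest_def f_prob_def f_upd_def f_wt_def)

lemma sharp_fork_simps[simp]:
  "f_prob (sharp_fork lo M f) = f_prob f" "f_upd (sharp_fork lo M f) = f_upd f"
  "f_dest (sharp_fork lo M f) = (if f_dest f = lo then Some (f_dest f) else None)"
  "f_wt (sharp_fork lo M f) = (if f_dest f = lo then f_wt f else (\<lambda>v r. M v))"
  by (simp_all add: sharp_fork_def lift_fork_def f_dest_def f_prob_def f_upd_def f_wt_def)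

lemma trans_simps[simp]:
  "t_src (a, b, c) = a" "t_guard (a, b, c) = b" "t_forks (a, b, c) = c"
  by (simp_all add: t_src_def t_guard_def t_forks_def)

definition TA :: "('p::finite \<Rightarrow> real set) \<Rightarrow> ('l, 'p, 'r::finite) transition \<Rightarrow> ('l option, 'p, 'r) transition" where
  "TA B t = (Some (t_src t), t_guard t \<inter> {v. PhiB B v}, map lift_fork (t_forks t))"
definition TB :: "('p::finite \<Rightarrow> real set) \<Rightarrow> 'l \<Rightarrow> (real^'p \<Rightarrow> real) \<Rightarrow> ('l, 'p, 'r::finite) transition \<Rightarrow> ('l option, 'p, 'r) transition" where
  "TB B lo M t = (Some (t_src t), t_guard t \<inter> {v. \<not> PhiB B v}, map (sharp_fork lo M) (t_forks t))"

lemma TAB_simps[simp]: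
  "t_src (TA B t) = Some (t_src t)" "t_guard (TA B t) = t_guard t \<inter> {v. PhiB B v}"
  "t_forks (TA B t) = map lift_fork (t_forks t)"
  "t_src (TB B lo M t) = Some (t_src t)" "t_guard (TB B lo M t) = t_guard t \<inter> {v. \<not> PhiB B v}"
  "t_forks (TB B lo M t) = map (sharp_fork lo M) (t_forks t)"
  by (simp_all add: TA_def TB_def)

lemma trans_trunc:
  "set (trans (truncate P B M)) = (\<Union>t\<in>{t\<in>set (trans P). t_src t \<noteq> l_out P}. {TA B t, TB B (l_out P) M t})"
  by (auto simp: truncate_def TA_def TB_def)

lemma trunc_simps[simp]:
  "locs (truncate P B M) = Some ` locs P \<union> {None}"
  "l_init (truncate P B M) = Some (l_init P)"
  "l_out (truncate P B M) = Some (l_out P)"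
  "distD (truncate P B M) = distD P"
  "term_locs (truncate P B M) = {Some (l_out P), None}"
  by (simp_all add: truncate_def)

lemma PhiB_sets:
  assumes "truncation_fun B"
  shows "{v::real^'p::finite. PhiB B v} \<in> sets borel"
proof -
  have [measurable]: "B x \<in> sets borel" for x
    using assms by (auto simp: truncation_fun_def intro: real_interval_borel_measurable)
  have "{v::real^'p. PhiB B v} = {v \<in> space borel. \<forall>x. v $ x \<in> B x}" by (simp add: PhiB_def)
  also have "\<dots> \<in> sets borel" by measurable
  finally show ?thesis .
qed

lemma good_T:
  fixes P :: "('l, 'p::finite, 'r::finite) wpts"
  assumes wf: "wpts_wf P" and term_out: "term_locs P = {l_out P}"
    and B: "truncation_fun B"
    and M_meas: "M \<in> borel_measurable borel"
  shows "good (truncate P B M)"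
proof -
  have gP: "good P" using good_P[OF wf] .
  have lo_in: "l_out P \<in> locs P" using wf by (simp add: wpts_wf_def)
  have pb: "{v::real^'p. PhiB B v} \<in> sets borel" using PhiB_sets[OF B] .
  have pb2: "{v::real^'p. \<not> PhiB B v} \<in> sets borel"
  proof -
    have "{v::real^'p. \<not> PhiB B v} = space borel - {v. PhiB B v}" by auto
    thus ?thesis using pb by auto
  qed
  have Mm: "(\<lambda>(v, r). M v) \<in> borel_measurable (borel \<Otimes>\<^sub>M (borel :: (real^'r) measure))"
    using M_meas by measurable
  have trs: "\<forall>t'\<in>set (trans (truncate P B M)). t_guard t' \<in> sets borel \<and> sum_list (map f_prob (t_forks t')) = 1 \<and>
     (\<forall>f\<in>set (t_forks t'). f_dest f \<in> locs (truncate P B M) \<and>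
       (\<lambda>(v, r). f_upd f v r) \<in> borel_measurable (borel \<Otimes>\<^sub>M borel) \<and>
       (\<lambda>(v, r). f_wt f v r) \<in> borel_measurable (borel \<Otimes>\<^sub>M borel))"
  proof
    fix t' assume "t' \<in> set (trans (truncate P B M))"
    then obtain t where t: "t \<in> set (trans P)" and t': "t' = TA B t \<or> t' = TB B (l_out P) M t"
      unfolding trans_trunc by blast
    have tp: "t_guard t \<in> sets borel" "sum_list (map f_prob (t_forks t)) = 1"
      "\<And>f. f \<in> set (t_forks t) \<Longrightarrow> f_dest f \<in> locs P \<and>
       (\<lambda>(v, r). f_upd f v r) \<in> borel_measurable (borel \<Otimes>\<^sub>M borel) \<and>
       (\<lambda>(v, r). f_wt f v r) \<in> borel_measurable (borel \<Otimes>\<^sub>M borel)"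
      using t gP unfolding good_def by auto
    show "t_guard t' \<in> sets borel \<and> sum_list (map f_prob (t_forks t')) = 1 \<and>
     (\<forall>f\<in>set (t_forks t'). f_dest f \<in> locs (truncate P B M) \<and>
       (\<lambda>(v, r). f_upd f v r) \<in> borel_measurable (borel \<Otimes>\<^sub>M borel) \<and>
       (\<lambda>(v, r). f_wt f v r) \<in> borel_measurable (borel \<Otimes>\<^sub>M borel))"
      using t' tp pb pb2 Mm lo_in by (auto simp: TA_def TB_def comp_def)
  qed
  have uq: "\<forall>l'\<in>locs (truncate P B M) - term_locs (truncate P B M). \<forall>v.
      \<exists>!t'. t' \<in> set (trans (truncate P B M)) \<and> t_src t' = l' \<and> v \<in> t_guard t'"
  proof (intro ballI allI)
    fix l' v assume "l' \<in> locs (truncate P B M) - term_locs (truncate P B M)"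
    then obtain l where l': "l' = Some l" and l: "l \<in> locs P - term_locs P" using term_out by auto
    obtain t where t: "t \<in> set (trans P)" "t_src t = l" "v \<in> t_guard t"
      and tu: "\<And>t2. t2 \<in> set (trans P) \<Longrightarrow> t_src t2 = l \<Longrightarrow> v \<in> t_guard t2 \<Longrightarrow> t2 = t"
      using gP l unfolding good_def by metis
    have lo: "t_src t \<noteq> l_out P" using t l term_out by auto
    let ?t' = "if PhiB B v then TA B t else TB B (l_out P) M t"
    show "\<exists>!t'. t' \<in> set (trans (truncate P B M)) \<and> t_src t' = l' \<and> v \<in> t_guard t'"
    proof (rule ex1I[of _ ?t'])
      have "TA B t \<in> set (trans (truncate P B M))" "TB B (l_out P) M t \<in> set (trans (truncate P B M))"
        unfolding trans_trunc using t(1) lo by blast+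
      thus "?t' \<in> set (trans (truncate P B M)) \<and> t_src ?t' = l' \<and> v \<in> t_guard ?t'"
        using t l' by (cases "PhiB B v") simp_all
      fix t2 assume t2: "t2 \<in> set (trans (truncate P B M)) \<and> t_src t2 = l' \<and> v \<in> t_guard t2"
      then obtain t1 where t1: "t1 \<in> set (trans P)" and t2': "t2 = TA B t1 \<or> t2 = TB B (l_out P) M t1"
        unfolding trans_trunc by blast
      have "t_src t1 = l" "v \<in> t_guard t1" using t2 t2' l' by auto
      hence "t1 = t" using tu t1 by blast
      thus "t2 = ?t'" using t2 t2' by auto
    qed
  qed
  show ?thesis unfolding good_def using trs uq wf unfolding wpts_wf_def by simp
qed



lemma step_rel:
  fixes P :: "('l, 'p::finite, 'r::finite) wpts"
  assumes wf: "wpts_wf P" and term_out: "term_locs P = {l_out P}"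
    and B: "truncation_fun B" and M_meas: "M \<in> borel_measurable borel"
    and l: "l \<in> locs P - term_locs P"
  shows "\<exists>f\<in>set (t_forks (enabled_trans P l v)).
   step P (l, v, w) (cl x) = (f_dest f, f_upd f v (snd x), w * f_wt f v (snd x)) \<and>
   step (truncate P B M) (Some l, v, w) (cl x) =
     (if PhiB B v then (Some (f_dest f), f_upd f v (snd x), w * f_wt f v (snd x))
      else (f_dest (sharp_fork (l_out P) M f), f_upd f v (snd x), w * f_wt (sharp_fork (l_out P) M f) v (snd x)))"
proof -
  have gP: "good P" using good_P[OF wf] .
  have gT: "good (truncate P B M)" using good_T[OF wf term_out B M_meas] .
  define t where "t = enabled_trans P l v"
  define fs where "fs = t_forks t"
  define j where "j = choose_fork (map f_prob fs) (fst (cl x))"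
  have t: "t \<in> set (trans P)" "t_src t = l" "v \<in> t_guard t"
    using enabled_ex[OF gP l] unfolding t_def by auto
  have s1: "sum_list (map f_prob fs) = 1" using t gP by (auto simp: good_def fs_def)
  have j: "j < length fs" unfolding j_def
    using choose_lt[OF s1, of "fst (cl x)"] cl_fst[of x] by simp
  have lo: "t_src t \<noteq> l_out P" using t l term_out by auto
  have lT: "Some l \<in> locs (truncate P B M) - term_locs (truncate P B M)" using l term_out by auto
  have sP: "step P (l, v, w) (cl x) = (f_dest (fs!j), f_upd (fs!j) v (snd x), w * f_wt (fs!j) v (snd x))"
    using step_nonterm[OF gP l, of v w x] by (simp add: Let_def t_def fs_def j_def)
  define t' where "t' = (if PhiB B v then TA B t else TB B (l_out P) M t)"
  have "TA B t \<in> set (trans (truncate P B M))" "TB B (l_out P) M t \<in> set (trans (truncate P B M))"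
    unfolding trans_trunc using t(1) lo by blast+
  hence t'm: "t' \<in> set (trans (truncate P B M))" "t_src t' = Some l" "v \<in> t_guard t'"
    using t unfolding t'_def by (cases "PhiB B v"; simp)+
  have et: "enabled_trans (truncate P B M) (Some l) v = t'"
    by (rule enabled_eq[OF gT lT t'm])
  have pr: "map f_prob (t_forks t') = map f_prob fs"
    unfolding t'_def fs_def by (cases "PhiB B v") (simp_all add: comp_def)
  have sT: "step (truncate P B M) (Some l, v, w) (cl x) =
     (let f = t_forks t' ! j in (f_dest f, f_upd f v (snd x), w * f_wt f v (snd x)))"
    using step_nonterm[OF gT lT, of v w x] by (simp add: Let_def et pr j_def)
  have nth: "t_forks t' ! j = (if PhiB B v then lift_fork (fs ! j) else sharp_fork (l_out P) M (fs ! j))"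
    unfolding t'_def fs_def using j unfolding fs_def by (cases "PhiB B v") simp_all
  show ?thesis
    apply (rule bexI[of _ "fs ! j"])
    using sP sT nth j by (auto simp: Let_def fs_def t_def)
qed



lemma reachable_locs: assumes wf: "wpts_wf P" shows "reachable P l v \<Longrightarrow> l \<in> locs P"
proof (induction rule: reachable.induct)
  case (init v0) thus ?case using wf by (simp add: wpts_wf_def)
next
  case (step l v t f r)
  have "l \<in> locs P - term_locs P" using step by simp
  hence "t \<in> set (trans P)" using enabled_ex[OF good_P[OF wf]] step by blast
  thus ?case using step wf unfolding wpts_wf_def by blast
qed

lemma En_0: "good Q \<Longrightarrow> En Q 0 s = Fv Q s"
proof -
  assume g: "good Q"
  interpret prob_space "drive_space Q" using prob_drive[OF g] .
  show ?thesis unfolding En_def by (simp add: emeasure_space_1)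
qed

lemma Xm_trunc: "Xm (truncate P B M) = Xm P"
  by (simp add: Xm_def)

lemma sae_out:
  assumes sae: "score_at_end P" and t: "t \<in> set (trans P)" and f: "f \<in> set (t_forks t)"
    and d: "f_dest f = l_out P" and f': "f' \<in> set (t_forks t)"
  shows "f_dest f' = l_out P"
proof -
  obtain wt where "t_forks t = [(l_out P, 1, \<lambda>v r. v, wt)]"
    using sae t f d unfolding score_at_end_def by blast
  thus ?thesis using f' by (simp add: f_dest_def)
qed

lemma sae_wt:
  assumes sae: "score_at_end P" and t: "t \<in> set (trans P)" and f: "f \<in> set (t_forks t)"
    and d: "f_dest f \<noteq> l_out P"
  shows "f_wt f = (\<lambda>v r. 1)"
  using assms unfolding score_at_end_def by blast



lemma step_caseA:
  fixes P :: "('l, 'p::finite, 'r::finite) wpts"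
  assumes wf: "wpts_wf P" and term_out: "term_locs P = {l_out P}" and sae: "score_at_end P"
    and B: "truncation_fun B" and M_meas: "M \<in> borel_measurable borel"
    and l: "l \<in> locs P - term_locs P"
    and nB: "\<not> PhiB B v" and ex: "\<exists>f\<in>set (t_forks (enabled_trans P l v)). f_dest f \<noteq> l_out P"
  shows "\<exists>y. step (truncate P B M) (Some l, v, w) (cl x) = (None, y, w * M v)"
proof -
  obtain f where f: "f\<in>set (t_forks (enabled_trans P l v))"
    and e: "step (truncate P B M) (Some l, v, w) (cl x) =
     (if PhiB B v then (Some (f_dest f), f_upd f v (snd x), w * f_wt f v (snd x))
      else (f_dest (sharp_fork (l_out P) M f), f_upd f v (snd x), w * f_wt (sharp_fork (l_out P) M f) v (snd x)))"
    using step_rel[OF wf term_out B M_meas l, of v w x] by blast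
  have t: "enabled_trans P l v \<in> set (trans P)" using enabled_ex[OF good_P[OF wf] l] by blast
  have "f_dest f \<noteq> l_out P"
    using ex sae_out[OF sae t f _] by blast
  thus ?thesis using e nB by simp
qed

lemma step_caseB:
  fixes P :: "('l, 'p::finite, 'r::finite) wpts"
  assumes wf: "wpts_wf P" and term_out: "term_locs P = {l_out P}" and sae: "score_at_end P"
    and B: "truncation_fun B" and M_meas: "M \<in> borel_measurable borel"
    and l: "l \<in> locs P - term_locs P"
    and nA: "\<not> (\<not> PhiB B v \<and> (\<exists>f\<in>set (t_forks (enabled_trans P l v)). f_dest f \<noteq> l_out P))"
  shows "\<exists>f\<in>set (t_forks (enabled_trans P l v)).
    step P (l, v, w) (cl x) = (f_dest f, f_upd f v (snd x), w * f_wt f v (snd x)) \<and>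
    step (truncate P B M) (Some l, v, w) (cl x) = (Some (f_dest f), f_upd f v (snd x), w * f_wt f v (snd x))"
proof -
  obtain f where f: "f\<in>set (t_forks (enabled_trans P l v))"
    and e1: "step P (l, v, w) (cl x) = (f_dest f, f_upd f v (snd x), w * f_wt f v (snd x))"
    and e: "step (truncate P B M) (Some l, v, w) (cl x) =
     (if PhiB B v then (Some (f_dest f), f_upd f v (snd x), w * f_wt f v (snd x))
      else (f_dest (sharp_fork (l_out P) M f), f_upd f v (snd x), w * f_wt (sharp_fork (l_out P) M f) v (snd x)))"
    using step_rel[OF wf term_out B M_meas l, of v w x] by blast
  show ?thesis
  proof (cases "PhiB B v")
    case True thus ?thesis using f e e1 by (intro bexI[OF _ f]) simp
  next
    case False
    hence "f_dest f = l_out P" using nA f by blast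
    thus ?thesis using f e e1 False by (intro bexI[OF _ f]) simp
  qed
qed

lemma Ei_caseA:
  fixes P :: "('l, 'p::finite, 'r::finite) wpts"
  assumes wf: "wpts_wf P" and term_out: "term_locs P = {l_out P}" and sae: "score_at_end P"
    and B: "truncation_fun B" and M_meas: "M \<in> borel_measurable borel"
    and l: "l \<in> locs P - term_locs P"
    and nB: "\<not> PhiB B v" and ex: "\<exists>f\<in>set (t_forks (enabled_trans P l v)). f_dest f \<noteq> l_out P"
  shows "Ei (truncate P B M) (Some l, v, 1) = ennreal (M v)"
proof -
  have gT: "good (truncate P B M)" using good_T[OF wf term_out B M_meas] .
  interpret prob_space "Xm (truncate P B M)" using prob_Xm[OF gT] .
  have lT: "Some l \<in> locs (truncate P B M)" using l by simp
  have "Ei (truncate P B M) (step (truncate P B M) (Some l, v, 1) (cl x)) = ennreal (M v)" for x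
  proof -
    obtain y where "step (truncate P B M) (Some l, v, 1) (cl x) = (None, y, 1 * M v)"
      using step_caseA[OF wf term_out sae B M_meas l nB ex] by blast
    thus ?thesis using Ei_term[OF gT] by (simp add: Fv_def)
  qed
  thus ?thesis using bellman_inf[OF gT lT, of v 1] by (simp add: emeasure_space_1)
qed

lemma En_le_Ei: "En Q n s \<le> Ei Q s"
  unfolding Ei_def by (rule SUP_upper) simp



lemma part1_n:
  fixes P :: "('l, 'p::finite, 'r::finite) wpts"
  assumes wf: "wpts_wf P" and term_out: "term_locs P = {l_out P}" and sae: "score_at_end P"
    and B: "truncation_fun B" and M_meas: "M \<in> borel_measurable borel"
    and H: "\<forall>t \<in> set (trans P). (\<exists>f \<in> set (t_forks t). f_dest f \<noteq> l_out P) \<longrightarrow>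
             (\<forall>v. reachable P (t_src t) v \<and> v \<in> t_guard t \<and> \<not> PhiB B v \<longrightarrow>
                  ew P (t_src t) v \<le> ennreal (M v))"
  shows "reachable P l v \<Longrightarrow> En P n (l, v, 1) \<le> Ei (truncate P B M) (Some l, v, 1)"
proof (induction n arbitrary: l v)
  have gP: "good P" using good_P[OF wf] .
  have gT: "good (truncate P B M)" using good_T[OF wf term_out B M_meas] .
  {
    fix l v n assume r: "reachable P l v" and lt: "l \<in> term_locs P"
    have "En P n (l, v, 1) = 1" using En_term[OF gP, of "(l, v, 1)"] lt by (simp add: Fv_def)
    moreover have "Ei (truncate P B M) (Some l, v, 1) = 1"
      using Ei_term[OF gT, of "(Some l, v, 1)"] lt term_out by (simp add: Fv_def)
    ultimately have "En P n (l, v, 1) \<le> Ei (truncate P B M) (Some l, v, 1)" by simp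
  } note tcase = this
  case 0
  show ?case
  proof (cases "l \<in> term_locs P")
    case True thus ?thesis using tcase 0 by blast
  next
    case False thus ?thesis using En_0[OF gP] by (simp add: Fv_def)
  qed
next
  case (Suc n l v)
  have gP: "good P" using good_P[OF wf] .
  have gT: "good (truncate P B M)" using good_T[OF wf term_out B M_meas] .
  have lL: "l \<in> locs P" using reachable_locs[OF wf Suc.prems] .
  show ?case
  proof (cases "l \<in> term_locs P")
    case True
    have "En P (Suc n) (l, v, 1) = 1" using En_term[OF gP, of "(l, v, 1)"] True by (simp add: Fv_def)
    moreover have "Ei (truncate P B M) (Some l, v, 1) = 1"
      using Ei_term[OF gT, of "(Some l, v, 1)"] True term_out by (simp add: Fv_def)
    ultimately show ?thesis by simp
  next
    case False
    hence l: "l \<in> locs P - term_locs P" using lL by simp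
    let ?t = "enabled_trans P l v"
    have t: "?t \<in> set (trans P)" "t_src ?t = l" "v \<in> t_guard ?t" using enabled_ex[OF gP l] by auto
    show ?thesis
    proof (cases "\<not> PhiB B v \<and> (\<exists>f\<in>set (t_forks ?t). f_dest f \<noteq> l_out P)")
      case True
      have "ew P l v \<le> ennreal (M v)" using H t True Suc.prems by metis
      hence "En P (Suc n) (l, v, 1) \<le> ennreal (M v)"
        using En_le_Ei[of P "Suc n" "(l, v, 1)"] ew_Ei[OF gP lL, of v] by simp
      thus ?thesis using Ei_caseA[OF wf term_out sae B M_meas l] True by simp
    next
      case False
      have pw: "En P n (step P (l, v, 1) (cl x)) \<le> Ei (truncate P B M) (step (truncate P B M) (Some l, v, 1) (cl x))" for x
      proof -
        obtain f where f: "f\<in>set (t_forks ?t)"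
          and e1: "step P (l, v, 1) (cl x) = (f_dest f, f_upd f v (snd x), 1 * f_wt f v (snd x))"
          and e2: "step (truncate P B M) (Some l, v, 1) (cl x) = (Some (f_dest f), f_upd f v (snd x), 1 * f_wt f v (snd x))"
          using step_caseB[OF wf term_out sae B M_meas l False] by blast
        show ?thesis
        proof (cases "f_dest f = l_out P")
          case True
          thus ?thesis unfolding e1 e2 using En_term[OF gP] Ei_term[OF gT] term_out by (simp add: Fv_def)
        next
          case ne: False
          have w1: "f_wt f = (\<lambda>v r. 1)" using sae_wt[OF sae t(1) f ne] .
          have "reachable P (f_dest f) (f_upd f v (snd x))"
            by (rule reachable.step[OF Suc.prems _ refl f]) (use l in simp)
          thus ?thesis unfolding e1 e2 w1 using Suc.IH by simp
        qed
      qed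
      have "En P (Suc n) (l, v, 1) = (\<integral>\<^sup>+x. En P n (step P (l, v, 1) (cl x)) \<partial>Xm P)"
        by (rule bellman_n(1)[OF gP lL])
      also have "\<dots> \<le> (\<integral>\<^sup>+x. Ei (truncate P B M) (step (truncate P B M) (Some l, v, 1) (cl x)) \<partial>Xm P)"
        by (rule nn_integral_mono) (rule pw)
      also have "\<dots> = Ei (truncate P B M) (Some l, v, 1)"
        using bellman_inf[OF gT, of "Some l" v 1] lL by (simp add: Xm_trunc)
      finally show ?thesis .
    qed
  qed
qed



lemma part2_n:
  fixes P :: "('l, 'p::finite, 'r::finite) wpts"
  assumes wf: "wpts_wf P" and term_out: "term_locs P = {l_out P}" and sae: "score_at_end P"
    and B: "truncation_fun B" and M_meas: "M \<in> borel_measurable borel"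
    and H: "\<forall>t \<in> set (trans P). (\<exists>f \<in> set (t_forks t). f_dest f \<noteq> l_out P) \<longrightarrow>
             (\<forall>v. reachable P (t_src t) v \<and> v \<in> t_guard t \<and> \<not> PhiB B v \<longrightarrow>
                  ennreal (M v) \<le> ew P (t_src t) v)"
  shows "reachable P l v \<Longrightarrow> En (truncate P B M) n (Some l, v, 1) \<le> Ei P (l, v, 1)"
proof (induction n arbitrary: l v)
  case (0 l v)
  have gP: "good P" using good_P[OF wf] .
  have gT: "good (truncate P B M)" using good_T[OF wf term_out B M_meas] .
  show ?case
  proof (cases "l \<in> term_locs P")
    case True thus ?thesis using En_0[OF gT] Ei_term[OF gP, of "(l, v, 1)"] term_out by (simp add: Fv_def)
  next
    case False thus ?thesis using En_0[OF gT] term_out by (simp add: Fv_def)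
  qed
next
  case (Suc n l v)
  have gP: "good P" using good_P[OF wf] .
  have gT: "good (truncate P B M)" using good_T[OF wf term_out B M_meas] .
  have lL: "l \<in> locs P" using reachable_locs[OF wf Suc.prems] .
  show ?case
  proof (cases "l \<in> term_locs P")
    case True
    thus ?thesis using En_term[OF gT, of "(Some l, v, 1)"] Ei_term[OF gP, of "(l, v, 1)"] term_out
      by (simp add: Fv_def)
  next
    case False
    hence l: "l \<in> locs P - term_locs P" using lL by simp
    let ?t = "enabled_trans P l v"
    have t: "?t \<in> set (trans P)" "t_src ?t = l" "v \<in> t_guard ?t" using enabled_ex[OF gP l] by auto
    show ?thesis
    proof (cases "\<not> PhiB B v \<and> (\<exists>f\<in>set (t_forks ?t). f_dest f \<noteq> l_out P)")
      case True
      have "ennreal (M v) \<le> ew P l v" using H t True Suc.prems by metis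
      moreover have "En (truncate P B M) (Suc n) (Some l, v, 1) \<le> ennreal (M v)"
        using En_le_Ei[of "truncate P B M" "Suc n" "(Some l, v, 1)"]
          Ei_caseA[OF wf term_out sae B M_meas l] True by simp
      ultimately show ?thesis using ew_Ei[OF gP lL, of v] by simp
    next
      case False
      have pw: "En (truncate P B M) n (step (truncate P B M) (Some l, v, 1) (cl x)) \<le> Ei P (step P (l, v, 1) (cl x))" for x
      proof -
        obtain f where f: "f\<in>set (t_forks ?t)"
          and e1: "step P (l, v, 1) (cl x) = (f_dest f, f_upd f v (snd x), 1 * f_wt f v (snd x))"
          and e2: "step (truncate P B M) (Some l, v, 1) (cl x) = (Some (f_dest f), f_upd f v (snd x), 1 * f_wt f v (snd x))"
          using step_caseB[OF wf term_out sae B M_meas l False] by blast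
        show ?thesis
        proof (cases "f_dest f = l_out P")
          case True
          thus ?thesis unfolding e1 e2 using En_term[OF gT] Ei_term[OF gP] term_out by (simp add: Fv_def)
        next
          case ne: False
          have w1: "f_wt f = (\<lambda>v r. 1)" using sae_wt[OF sae t(1) f ne] .
          have "reachable P (f_dest f) (f_upd f v (snd x))"
            by (rule reachable.step[OF Suc.prems _ refl f]) (use l in simp)
          thus ?thesis unfolding e1 e2 w1 using Suc.IH by simp
        qed
      qed
      have lT: "Some l \<in> locs (truncate P B M)" using lL by simp
      have "En (truncate P B M) (Suc n) (Some l, v, 1) =
          (\<integral>\<^sup>+x. En (truncate P B M) n (step (truncate P B M) (Some l, v, 1) (cl x)) \<partial>Xm P)"
        using bellman_n(1)[OF gT lT] by (simp add: Xm_trunc)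
      also have "\<dots> \<le> (\<integral>\<^sup>+x. Ei P (step P (l, v, 1) (cl x)) \<partial>Xm P)"
        by (rule nn_integral_mono) (rule pw)
      also have "\<dots> = Ei P (l, v, 1)"
        using bellman_inf[OF gP lL] by simp
      finally show ?thesis .
    qed
  qed
qed

theorem theoremC2:
  fixes P :: "('l, 'p::finite, 'r::finite) wpts"
    and B :: "'p \<Rightarrow> real set"
    and M :: "real^'p \<Rightarrow> real"
  assumes wf: "wpts_wf P"
    and term_out: "term_locs P = {l_out P}"
    and sae: "score_at_end P"
    and B: "truncation_fun B"
    and M_nonneg: "\<forall>v. 0 \<le> M v"
    and M_bounded: "\<exists>K. \<forall>v. M v \<le> K"
    and M_meas: "M \<in> borel_measurable borel"
  shows "((\<forall>t \<in> set (trans P). (\<exists>f \<in> set (t_forks t). f_dest f \<noteq> l_out P) \<longrightarrow>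
             (\<forall>v. reachable P (t_src t) v \<and> v \<in> t_guard t \<and> \<not> PhiB B v \<longrightarrow>
                  ew P (t_src t) v \<le> ennreal (M v)))
          \<longrightarrow> (\<forall>v \<in> msupp (mu_init P). total_mass P v \<le> total_mass (truncate P B M) v))
       \<and> ((\<forall>t \<in> set (trans P). (\<exists>f \<in> set (t_forks t). f_dest f \<noteq> l_out P) \<longrightarrow>
             (\<forall>v. reachable P (t_src t) v \<and> v \<in> t_guard t \<and> \<not> PhiB B v \<longrightarrow>
                  ennreal (M v) \<le> ew P (t_src t) v))
          \<longrightarrow> (\<forall>v \<in> msupp (mu_init P). total_mass (truncate P B M) v \<le> total_mass P v))"
proof (intro conjI impI ballI)
  have gP: "good P" using good_P[OF wf] .
  have gT: "good (truncate P B M)" using good_T[OF wf term_out B M_meas] .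
  have li: "l_init P \<in> locs P" using wf by (simp add: wpts_wf_def)
  have liT: "Some (l_init P) \<in> locs (truncate P B M)" using li by simp
  {
    fix v assume H: "\<forall>t \<in> set (trans P). (\<exists>f \<in> set (t_forks t). f_dest f \<noteq> l_out P) \<longrightarrow>
             (\<forall>v. reachable P (t_src t) v \<and> v \<in> t_guard t \<and> \<not> PhiB B v \<longrightarrow>
                  ew P (t_src t) v \<le> ennreal (M v))"
      and v: "v \<in> msupp (mu_init P)"
    have r: "reachable P (l_init P) v" using v by (rule reachable.init)
    have "Ei P (l_init P, v, 1) \<le> Ei (truncate P B M) (Some (l_init P), v, 1)"
      unfolding Ei_def[of P] by (rule SUP_least) (rule part1_n[OF wf term_out sae B M_meas H r])
    thus "total_mass P v \<le> total_mass (truncate P B M) v"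
      unfolding total_mass_def using ew_Ei[OF gP li] ew_Ei[OF gT liT] by simp
  }
  {
    fix v assume H: "\<forall>t \<in> set (trans P). (\<exists>f \<in> set (t_forks t). f_dest f \<noteq> l_out P) \<longrightarrow>
             (\<forall>v. reachable P (t_src t) v \<and> v \<in> t_guard t \<and> \<not> PhiB B v \<longrightarrow>
                  ennreal (M v) \<le> ew P (t_src t) v)"
      and v: "v \<in> msupp (mu_init P)"
    have r: "reachable P (l_init P) v" using v by (rule reachable.init)
    have "Ei (truncate P B M) (Some (l_init P), v, 1) \<le> Ei P (l_init P, v, 1)"
      unfolding Ei_def[of "truncate P B M"] by (rule SUP_least) (rule part2_n[OF wf term_out sae B M_meas H r])
    thus "total_mass (truncate P B M) v \<le> total_mass P v"
      unfolding total_mass_def using ew_Ei[OF gP li] ew_Ei[OF gT liT] by simp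
  }
qed


end
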